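(* Let $(\Omega,\mathcal{F},\mathbb{P})$ be a probability space, let $\rho$ be a random variable with $\rho>0$ almost surely, $\mathbb{E}[\rho]<\infty$, and continuous CDF $F_\rho$, and set $\delta:=\mathbb{E}[\rho]$. Let $\alpha\in(0,1)$ and $x>0$, and for a random variable $X$ let $V(X):=F_X^{-1}(\alpha)$, the $\alpha$-quantile of $X$ given by the right-continuous quantile function (equivalently $V(X)=\int_{[0,1]}F_X^{-1}(z)\,m(dz)$ with $m$ the point mass at $\alpha$). Define for $c\in(0,1)$ $$\zeta(c):=\frac{m([c,1])}{\int_c^1F_\rho^{-1}(1-z)\,dz}=\frac{\mathbf{1}_{\{c\le\alpha\}}}{\int_c^1F_\rho^{-1}(1-z)\,dz},\qquad \gamma^*:=\sup_{c\in(0,1)}\zeta(c).$$ Then $\gamma^*=\zeta(\alpha)>1/\delta$, and $X^*:=k^*\mathbf{1}_{\{\rho\le\beta^*\}}$ with $\beta^*:=F_\rho^{-1}(1-\alpha)$ and $k^*:=x/\mathbb{E}[\rho\mathbf{1}_{\{\rho\le\beta^*\}}]$ is optimal for the problem of maximizing $V(X)$ over random variables $X$ subject to $\mathbb{E}[\rho X]\le x$ and $X\ge0$.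
   Context: $F_Y^{-1}$ denotes the right-continuous quantile function (right-continuous inverse of the CDF) of a random variable $Y$. *)

theory Defs
  imports "HOL-Probability.Probability"
begin

definition quantile_rc :: "(real \<Rightarrow> real) \<Rightarrow> real \<Rightarrow> real" where
  "quantile_rc F u = Inf {t. F t > u}"

definition rv_quantile :: "'a measure \<Rightarrow> ('a \<Rightarrow> real) \<Rightarrow> real \<Rightarrow> real" where
  "rv_quantile M X = quantile_rc (cdf (distr M borel X))"

definition zeta :: "'a measure \<Rightarrow> ('a \<Rightarrow> real) \<Rightarrow> real \<Rightarrow> real \<Rightarrow> real" where
  "zeta M \<rho> \<alpha> c = (if c \<le> \<alpha> then 1 else 0) /
      (LINT z:{c..1}|lborel. rv_quantile M \<rho> (1 - z))"

definition feasible :: "'a measure \<Rightarrow> ('a \<Rightarrow> real) \<Rightarrow> real \<Rightarrow> ('a \<Rightarrow> real) \<Rightarrow> bool" where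
  "feasible M \<rho> x X \<longleftrightarrow> X \<in> borel_measurable M \<and> (AE \<omega> in M. X \<omega> \<ge> 0) \<and>
      (\<integral>\<^sup>+ \<omega>. ennreal (\<rho> \<omega> * X \<omega>) \<partial>M) \<le> ennreal x"

end

theory Submission
  imports Defs
begin

locale qF =
  fixes F :: "real \<Rightarrow> real"
  assumes mono: "mono F" and nonneg: "\<And>t. 0 \<le> F t" and le1: "\<And>t. F t \<le> 1"
    and zero: "\<And>t. t \<le> 0 \<Longrightarrow> F t = 0"
    and top: "(F \<longlongrightarrow> 1) at_top"
    and rc: "\<And>a. continuous (at_right a) F"
begin

abbreviation "Q \<equiv> quantile_rc F"

lemma S_bdd: assumes "0 \<le> u" shows "bdd_below {t. F t > u}"
proof (rule bdd_belowI[of _ 0])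
  fix t assume "t \<in> {t. F t > u}"
  then have ut: "u < F t" by simp
  show "0 \<le> t"
  proof (rule ccontr)
    assume "\<not> 0 \<le> t"
    then have "F t = 0" using zero[of t] by simp
    with ut assms show False by simp
  qed
qed

lemma S_ne: "u < 1 \<Longrightarrow> {t. F t > u} \<noteq> {}"
proof -
  assume "u < 1"
  from order_tendstoD(1)[OF top this] have "\<forall>\<^sub>F t in at_top. u < F t" .
  then obtain t where "u < F t" using eventually_happens' trivial_limit_at_top_linorder by blast
  then show ?thesis by auto
qed

lemma Q_le: "0 \<le> u \<Longrightarrow> F t > u \<Longrightarrow> Q u \<le> t"
  unfolding quantile_rc_def using S_bdd[of u] by (intro cInf_lower) simp_all

lemma pos_of_gt: "0 \<le> u \<Longrightarrow> u < F t \<Longrightarrow> 0 < t"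
  using zero[of t] by (cases "t \<le> 0") auto

lemma Q_nonneg: "0 \<le> u \<Longrightarrow> u < 1 \<Longrightarrow> 0 \<le> Q u"
  unfolding quantile_rc_def
proof (rule cInf_greatest[OF S_ne])
  fix t assume "0 \<le> u" "t \<in> {t. u < F t}"
  then show "0 \<le> t" using pos_of_gt[of u t] by simp
qed simp

lemma F_Q_ge: assumes "0 \<le> u" "u < 1" shows "u \<le> F (Q u)"
proof -
  have "F (Q u) = (INF s\<in>{t. F t > u}. F s)"
    unfolding quantile_rc_def
    by (rule continuous_at_Inf_mono[OF mono rc S_ne[OF assms(2)] S_bdd[OF assms(1)]])
  also have "\<dots> \<ge> u"
    by (rule cINF_greatest[OF S_ne[OF assms(2)]]) auto
  finally show ?thesis .
qed

lemma Q_pos: "0 < u \<Longrightarrow> u < 1 \<Longrightarrow> 0 < Q u"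
  using F_Q_ge[of u] zero[of "Q u"] by (cases "Q u \<le> 0") auto

lemma Q_mono: "0 \<le> u \<Longrightarrow> u \<le> v \<Longrightarrow> v < 1 \<Longrightarrow> Q u \<le> Q v"
  unfolding quantile_rc_def
  by (rule cInf_superset_mono[OF S_ne S_bdd]) (simp_all, fastforce)

lemma Q_mono_on: "mono_on {0..<1} Q"
  by (rule mono_onI) (auto intro: Q_mono)

lemma F_Q_le: assumes "continuous_on UNIV F" "0 \<le> u" "u < 1" shows "F (Q u) \<le> u"
proof -
  have c: "continuous (at_left (Q u)) F"
    using assms(1) by (simp add: continuous_on_eq_continuous_at continuous_at_split)
  have "F (Sup {..<Q u}) = (SUP s\<in>{..<Q u}. F s)"
    by (rule continuous_at_Sup_mono[OF mono]) (use c in auto)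
  also have "\<dots> \<le> u"
  proof (rule cSUP_least)
    fix s assume "s \<in> {..<Q u}"
    then show "F s \<le> u" using Q_le[OF assms(2), of s] by (cases "F s \<le> u") auto
  qed auto
  finally show ?thesis by simp
qed

lemma Q_meas: "Q \<in> borel_measurable (restrict_space lborel {0<..<1})"
proof -
  have "mono_on {0<..<1} Q" by (rule mono_on_subset[OF Q_mono_on]) auto
  then have "Q \<in> borel_measurable (restrict_space borel {0<..<1})"
    by (rule borel_measurable_mono_on_fnc)
  then show ?thesis
    by (subst measurable_cong_sets[OF sets_restrict_space_cong[OF sets_lborel] refl])
qed

end

lemma quantile_transform:
  assumes D: "real_distribution D" and q: "qF (cdf D)"
  shows "distr (restrict_space lborel {0<..<1}) borel (quantile_rc (cdf D)) = D"
proof -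
  interpret qF "cdf D" by (rule q)
  interpret D: real_distribution D by (rule D)
  let ?U = "restrict_space lborel {0<..<1::real}"
  interpret U: prob_space ?U
    by (auto simp add: emeasure_restrict_space space_restrict_space intro!: prob_spaceI)
  have Qm[measurable]: "Q \<in> measurable ?U borel" by (rule Q_meas)
  show ?thesis
  proof (intro cdf_unique ext)
    show "real_distribution (distr ?U borel Q)" by auto
    show "real_distribution D" by (rule D)
    fix x
    let ?S = "Q -` {..x} \<inter> space ?U"
    have c: "cdf (distr ?U borel Q) x = measure ?U ?S"
      by (subst cdf_def2) (rule measure_distr[OF Qm], simp)
    have sU: "\<And>A. A \<in> sets borel \<Longrightarrow> A \<subseteq> {0<..<1} \<Longrightarrow> A \<in> sets ?U"
      by (auto simp: sets_restrict_space)
    have mU: "\<And>A. A \<in> sets borel \<Longrightarrow> A \<subseteq> {0<..<1} \<Longrightarrow> measure ?U A = measure lborel A"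
      by (subst measure_restrict_space) auto
    have Fx: "0 \<le> cdf D x" "cdf D x \<le> 1" by (rule nonneg, rule le1)
    have A: "{0<..<cdf D x} \<subseteq> ?S"
    proof
      fix u assume u: "u \<in> {0<..<cdf D x}"
      then have "Q u \<le> x" by (intro Q_le) auto
      with u Fx show "u \<in> ?S" by (auto simp: space_restrict_space)
    qed
    have B: "?S \<subseteq> {0<..cdf D x} \<inter> {..<1}"
    proof
      fix u assume u: "u \<in> ?S"
      then have u01: "0 < u" "u < 1" by (auto simp: space_restrict_space)
      have "u \<le> cdf D (Q u)" by (rule F_Q_ge) (use u01 in auto)
      also have "\<dots> \<le> cdf D x" using u by (intro monoD[OF mono]) auto
      finally show "u \<in> {0<..cdf D x} \<inter> {..<1}" using u01 by auto
    qed
    have "measure ?U {0<..<cdf D x} \<le> measure ?U ?S"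
      by (rule U.finite_measure_mono[OF A]) (rule measurable_sets[OF Qm], simp)
    moreover have "measure ?U ?S \<le> measure ?U ({0<..cdf D x} \<inter> {..<1})"
      by (rule U.finite_measure_mono[OF B]) (intro sU, auto)
    moreover have "measure ?U {0<..<cdf D x} = cdf D x"
      using Fx by (subst mU) auto
    moreover have "measure ?U ({0<..cdf D x} \<inter> {..<1}) \<le> cdf D x"
    proof -
      have "measure ?U ({0<..cdf D x} \<inter> {..<1}) = measure lborel ({0<..cdf D x} \<inter> {..<1})"
        by (rule mU) auto
      also have "\<dots> \<le> measure lborel {0<..cdf D x}"
        using Fx by (intro measure_mono_fmeasurable) (auto simp: fmeasurable_def)
      also have "\<dots> = cdf D x" using Fx by simp
      finally show ?thesis .
    qed
    ultimately show "cdf (distr ?U borel Q) x = cdf D x" unfolding c by linarith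
  qed
qed


lemma cdf_distr_eq:
  assumes "X \<in> borel_measurable M"
  shows "cdf (distr M borel X) t = measure M {\<omega>\<in>space M. X \<omega> \<le> t}"
  using assms by (simp add: cdf_def measure_distr vimage_def Int_def conj_commute)

lemma Qind_meas:
  assumes q: "qF F" and "0 < c"
  shows "(\<lambda>u. indicator {0..1-c} u * quantile_rc F u) \<in> borel_measurable lborel"
proof -
  interpret qF F by (rule q)
  have "Q \<in> borel_measurable (restrict_space borel {0..<1})"
    by (rule borel_measurable_mono_on_fnc[OF Q_mono_on])
  then have "(\<lambda>u. indicator {0..<1} u *\<^sub>R Q u) \<in> borel_measurable borel"
    by (subst (asm) borel_measurable_restrict_space_iff) auto
  then have "(\<lambda>u. indicator {0..1-c} u * (indicator {0..<1} u *\<^sub>R Q u)) \<in> borel_measurable borel"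
    by measurable
  also have "(\<lambda>u. indicator {0..1-c} u * (indicator {0..<1} u *\<^sub>R Q u)) = (\<lambda>u. indicator {0..1-c} u * Q u)"
    using assms(2) by (auto simp: fun_eq_iff split: split_indicator)
  finally show ?thesis by simp
qed

lemma Qind_int:
  assumes q: "qF F" and "0 < c"
  shows "integrable lborel (\<lambda>u. indicator {0..1-c} u * quantile_rc F u)"
proof -
  interpret qF F by (rule q)
  show ?thesis
  proof (rule integrableI_bounded_set[where A="{0..1-c}" and B="Q (1-c)"])
    show "(\<lambda>u. indicator {0..1-c} u * Q u) \<in> borel_measurable lborel"
      by (rule Qind_meas[OF q assms(2)])
    show "AE x in lborel. x \<in> {0..1-c} \<longrightarrow> norm (indicator {0..1-c} x * Q x) \<le> Q (1-c)"
      using assms(2) by (auto intro!: AE_I2 Q_mono simp: Q_nonneg)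
    show "emeasure lborel {0..1-c} < \<infinity>" by (cases "0 \<le> 1 - c") auto
  qed (auto split: split_indicator)
qed

lemma reflect_J:
  assumes "0 < c"
  shows "(LINT z:{c..1}|lborel. quantile_rc F (1 - z)) = (\<integral>u. indicator {0..1-c} u * quantile_rc F u \<partial>lborel)"
  unfolding set_lebesgue_integral_def
  by (subst lborel_integral_real_affine[where c="-1" and t=1])
     (auto intro!: Bochner_Integration.integral_cong split: split_indicator)


theorem corollary1:
  fixes M :: "'a measure" and \<rho> :: "'a \<Rightarrow> real" and \<alpha> x :: real
  assumes "prob_space M"
    and "\<rho> \<in> borel_measurable M"
    and "AE \<omega> in M. \<rho> \<omega> > 0"
    and "integrable M \<rho>"
    and "continuous_on UNIV (cdf (distr M borel \<rho>))"
    and "0 < \<alpha>" "\<alpha> < 1" "x > 0"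
  defines "\<delta> \<equiv> (\<integral>\<omega>. \<rho> \<omega> \<partial>M)"
    and "\<beta> \<equiv> rv_quantile M \<rho> (1 - \<alpha>)"
  defines "k \<equiv> x / (\<integral>\<omega>. \<rho> \<omega> * indicator {\<omega>. \<rho> \<omega> \<le> \<beta>} \<omega> \<partial>M)"
  defines "Xstar \<equiv> (\<lambda>\<omega>. k * indicator {\<omega>. \<rho> \<omega> \<le> \<beta>} \<omega>)"
  shows "(SUP c\<in>{0<..<1}. zeta M \<rho> \<alpha> c) = zeta M \<rho> \<alpha> \<alpha>
    \<and> zeta M \<rho> \<alpha> \<alpha> > 1 / \<delta>
    \<and> feasible M \<rho> x Xstar
    \<and> (\<forall>X. feasible M \<rho> x X \<longrightarrow> rv_quantile M X \<alpha> \<le> rv_quantile M Xstar \<alpha>)"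
proof -
  interpret P: prob_space M by (rule assms(1))
  note rhom[measurable] = assms(2)
  define D where "D = distr M borel \<rho>"
  define F where "F = cdf D"
  have D: "real_distribution D" unfolding D_def by (rule P.real_distribution_distr) simp
  interpret D: real_distribution D by (rule D)
  have Fdef: "\<And>t. F t = measure M {\<omega>\<in>space M. \<rho> \<omega> \<le> t}"
    unfolding F_def D_def by (rule cdf_distr_eq[OF rhom])
  have q: "qF F"
  proof
    show "mono F" unfolding F_def by (intro monoI D.cdf_nondecreasing)
    show "\<And>t. 0 \<le> F t" unfolding F_def by (rule D.cdf_nonneg)
    show "\<And>t. F t \<le> 1" unfolding F_def by (rule D.cdf_bounded_prob)
    show "(F \<longlongrightarrow> 1) at_top" unfolding F_def by (rule D.cdf_lim_at_top_prob)
    show "\<And>a. continuous (at_right a) F" unfolding F_def by (rule D.cdf_is_right_cont)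
    fix t :: real assume "t \<le> 0"
    with assms(3) have "AE \<omega> in M. \<not> \<rho> \<omega> \<le> t" by (auto elim!: eventually_mono)
    then show "F t = 0" unfolding Fdef by (rule P.prob_eq_0_AE)
  qed
  interpret qF F by (rule q)
  have Fc: "continuous_on UNIV F" unfolding F_def D_def by (rule assms(5))
  have rq: "rv_quantile M \<rho> = Q" unfolding rv_quantile_def F_def D_def ..
  have \<beta>Q: "\<beta> = Q (1 - \<alpha>)" unfolding \<beta>_def rq ..
  have F\<beta>: "F \<beta> = 1 - \<alpha>"
    using F_Q_ge[of "1 - \<alpha>"] F_Q_le[OF Fc, of "1 - \<alpha>"] assms(6,7) unfolding \<beta>Q by auto
  have \<beta>pos: "0 < \<beta>" unfolding \<beta>Q using assms(6,7) by (intro Q_pos) auto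
  define B where "B = {\<omega>\<in>space M. \<rho> \<omega> \<le> \<beta>}"
  have Bm[measurable]: "B \<in> sets M" unfolding B_def by measurable
  have PB: "measure M B = 1 - \<alpha>" using F\<beta> unfolding Fdef B_def by simp
  have ind_eq: "\<And>\<omega>. \<omega> \<in> space M \<Longrightarrow> indicator {\<omega>. \<rho> \<omega> \<le> \<beta>} \<omega> = (indicator B \<omega> :: real)"
    unfolding B_def by (simp split: split_indicator)
  define E where "E = (\<integral>\<omega>. \<rho> \<omega> * indicator B \<omega> \<partial>M)"
  have E_eq: "(\<integral>\<omega>. \<rho> \<omega> * indicator {\<omega>. \<rho> \<omega> \<le> \<beta>} \<omega> \<partial>M) = E"
    unfolding E_def by (rule Bochner_Integration.integral_cong) (auto simp: ind_eq)
  have intE: "integrable M (\<lambda>\<omega>. \<rho> \<omega> * indicator B \<omega>)"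
    by (rule integrable_real_mult_indicator[OF Bm assms(4)])
  have Epos: "0 < E"
  proof -
    have nn: "AE \<omega> in M. 0 \<le> \<rho> \<omega> * indicator B \<omega>"
      using assms(3) by eventually_elim (auto split: split_indicator)
    have "E \<ge> 0" unfolding E_def by (rule integral_nonneg_AE[OF nn])
    moreover have "E \<noteq> 0"
    proof
      assume "E = 0"
      then have "AE \<omega> in M. \<rho> \<omega> * indicator B \<omega> = 0"
        using integral_nonneg_eq_0_iff_AE[OF intE nn] unfolding E_def by simp
      then have "AE \<omega> in M. \<omega> \<notin> B" using assms(3) by eventually_elim (auto split: split_indicator)
      then have "measure M B = 0" using P.prob_eq_0[OF Bm] by simp
      with PB assms(7) show False by simp
    qed
    ultimately show ?thesis by simp
  qed
  have kE: "k = x / E" unfolding k_def E_eq ..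
  have kpos: "0 < k" using Epos assms(8) kE by simp
  have xkE: "x = k * E" using kE Epos by simp
  have Xs_eq: "\<And>\<omega>. \<omega> \<in> space M \<Longrightarrow> Xstar \<omega> = k * indicator B \<omega>"
    unfolding Xstar_def by (simp add: ind_eq)
  have Xsm[measurable]: "Xstar \<in> borel_measurable M"
  proof -
    have "(\<lambda>\<omega>. k * indicator B \<omega>) \<in> borel_measurable M" by measurable
    then show ?thesis by (subst measurable_cong[OF Xs_eq])
  qed
  have feas: "feasible M \<rho> x Xstar"
    unfolding feasible_def
  proof (intro conjI)
    show "Xstar \<in> borel_measurable M" by (rule Xsm)
    show "AE \<omega> in M. 0 \<le> Xstar \<omega>" using kpos by (auto simp: Xstar_def)
    have "(\<integral>\<^sup>+\<omega>. ennreal (\<rho> \<omega> * Xstar \<omega>) \<partial>M) = (\<integral>\<^sup>+\<omega>. ennreal (k * (\<rho> \<omega> * indicator B \<omega>)) \<partial>M)"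
      by (rule nn_integral_cong) (simp add: Xs_eq mult_ac)
    also have "\<dots> = ennreal (\<integral>\<omega>. k * (\<rho> \<omega> * indicator B \<omega>) \<partial>M)"
    proof (rule nn_integral_eq_integral)
      show "integrable M (\<lambda>\<omega>. k * (\<rho> \<omega> * indicator B \<omega>))" using intE by simp
      show "AE \<omega> in M. 0 \<le> k * (\<rho> \<omega> * indicator B \<omega>)"
        using assms(3) by eventually_elim (use kpos in \<open>auto split: split_indicator\<close>)
    qed
    also have "\<dots> = ennreal x" using xkE by (simp add: E_def)
    finally show "(\<integral>\<^sup>+\<omega>. ennreal (\<rho> \<omega> * Xstar \<omega>) \<partial>M) \<le> ennreal x" by simp
  qed
  have cX: "\<And>t. measure M {\<omega>\<in>space M. Xstar \<omega> \<le> t} = (if k \<le> t then 1 else if 0 \<le> t then \<alpha> else 0)"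
  proof -
    fix t
    show "measure M {\<omega>\<in>space M. Xstar \<omega> \<le> t} = (if k \<le> t then 1 else if 0 \<le> t then \<alpha> else 0)"
    proof (cases "k \<le> t")
      case True
      then have "{\<omega>\<in>space M. Xstar \<omega> \<le> t} = space M"
        using kpos by (auto simp: Xs_eq split: split_indicator)
      then show ?thesis using True by (simp add: P.prob_space)
    next
      case False
      show ?thesis
      proof (cases "0 \<le> t")
        case True
        then have "{\<omega>\<in>space M. Xstar \<omega> \<le> t} = space M - B"
          using False by (auto simp: Xs_eq split: split_indicator)
        then show ?thesis using True False PB by (simp add: P.prob_compl)
      next
        case f2: False
        have "{\<omega>\<in>space M. Xstar \<omega> \<le> t} = {}"
          using kpos f2 by (auto simp: Xs_eq split: split_indicator)
        then have "measure M {\<omega>\<in>space M. Xstar \<omega> \<le> t} = 0" by (simp only: measure_empty)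
        then show ?thesis using False f2 by simp
      qed
    qed
  qed
  have qX: "rv_quantile M Xstar \<alpha> = k"
  proof -
    have "{t. \<alpha> < cdf (distr M borel Xstar) t} = {k..}"
      using assms(6,7) kpos by (auto simp: cdf_distr_eq[OF Xsm] cX)
    then show ?thesis unfolding rv_quantile_def quantile_rc_def by simp
  qed
  have opt: "rv_quantile M X \<alpha> \<le> k" if f: "feasible M \<rho> x X" for X
  proof (rule ccontr)
    assume nle: "\<not> rv_quantile M X \<alpha> \<le> k"
    from f have Xm[measurable]: "X \<in> borel_measurable M" and X0: "AE \<omega> in M. 0 \<le> X \<omega>"
      and bud: "(\<integral>\<^sup>+\<omega>. ennreal (\<rho> \<omega> * X \<omega>) \<partial>M) \<le> ennreal x"
      by (auto simp: feasible_def)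
    define S where "S = {t. \<alpha> < cdf (distr M borel X) t}"
    have v: "rv_quantile M X \<alpha> = Inf S" unfolding rv_quantile_def quantile_rc_def S_def ..
    have bdd: "bdd_below S"
    proof (rule bdd_belowI[of _ 0])
      fix t assume tS: "t \<in> S"
      show "0 \<le> t"
      proof (rule ccontr)
        assume "\<not> 0 \<le> t"
        with X0 have "AE \<omega> in M. \<not> X \<omega> \<le> t" by (auto elim!: eventually_mono)
        then have "cdf (distr M borel X) t = 0" unfolding cdf_distr_eq[OF Xm] by (rule P.prob_eq_0_AE)
        with tS assms(6) show False by (simp add: S_def)
      qed
    qed
    define t where "t = (k + Inf S) / 2"
    have kt: "k < t" and tv: "t < Inf S" using nle v by (auto simp: t_def)
    have tpos: "0 < t" using kt kpos by simp
    have "t \<notin> S" using cInf_lower[OF _ bdd, of t] tv by force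
    then have Fle: "measure M {\<omega>\<in>space M. X \<omega> \<le> t} \<le> \<alpha>" by (simp add: S_def cdf_distr_eq[OF Xm])
    define A where "A = {\<omega>\<in>space M. t < X \<omega>}"
    have Am[measurable]: "A \<in> sets M" unfolding A_def by measurable
    have "A = space M - {\<omega>\<in>space M. X \<omega> \<le> t}" by (auto simp: A_def)
    then have PA: "measure M A \<ge> 1 - \<alpha>" using Fle by (simp add: P.prob_compl)
    have intA: "integrable M (\<lambda>\<omega>. \<rho> \<omega> * indicator A \<omega>)"
      by (rule integrable_real_mult_indicator[OF Am assms(4)])
    have intAB: "integrable M (\<lambda>\<omega>. \<rho> \<omega> * (indicator A \<omega> - indicator B \<omega>))"
      using Bochner_Integration.integrable_diff[OF intA intE] by (simp add: right_diff_distrib)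
    have intIA: "integrable M (indicator A :: 'a \<Rightarrow> real)" and intIB: "integrable M (indicator B :: 'a \<Rightarrow> real)"
      using Am Bm by (auto intro!: integrable_real_indicator simp: less_top[symmetric])
    have EA: "E \<le> (\<integral>\<omega>. \<rho> \<omega> * indicator A \<omega> \<partial>M)"
    proof -
      have "\<beta> * (measure M A - measure M B) = (\<integral>\<omega>. \<beta> * (indicator A \<omega> - indicator B \<omega>) \<partial>M)"
      proof -
        have "A \<inter> space M = A" "B \<inter> space M = B" using Am Bm by (auto dest: sets.sets_into_space)
        moreover note intIA intIB
        ultimately show ?thesis by (simp add: Bochner_Integration.integral_diff)
      qed
      also have "\<dots> \<le> (\<integral>\<omega>. \<rho> \<omega> * (indicator A \<omega> - indicator B \<omega>) \<partial>M)"
      proof (rule integral_mono[OF _ intAB])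
        show "integrable M (\<lambda>\<omega>. \<beta> * (indicator A \<omega> - indicator B \<omega>))"
          using Bochner_Integration.integrable_diff[OF intIA intIB] by simp
        fix \<omega> assume "\<omega> \<in> space M"
        then show "\<beta> * (indicator A \<omega> - indicator B \<omega>) \<le> \<rho> \<omega> * (indicator A \<omega> - indicator B \<omega>)"
          by (auto simp: B_def split: split_indicator)
      qed
      also have "\<dots> = (\<integral>\<omega>. \<rho> \<omega> * indicator A \<omega> \<partial>M) - E"
        unfolding E_def by (simp add: right_diff_distrib Bochner_Integration.integral_diff[OF intA intE])
      finally have "\<beta> * (measure M A - measure M B) \<le> (\<integral>\<omega>. \<rho> \<omega> * indicator A \<omega> \<partial>M) - E" .
      moreover have "0 \<le> \<beta> * (measure M A - measure M B)" using \<beta>pos PA PB by simp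
      ultimately show ?thesis by simp
    qed
    have "(\<integral>\<^sup>+\<omega>. ennreal (t * (\<rho> \<omega> * indicator A \<omega>)) \<partial>M) = ennreal (\<integral>\<omega>. t * (\<rho> \<omega> * indicator A \<omega>) \<partial>M)"
    proof (rule nn_integral_eq_integral)
      show "integrable M (\<lambda>\<omega>. t * (\<rho> \<omega> * indicator A \<omega>))" using intA by simp
      show "AE \<omega> in M. 0 \<le> t * (\<rho> \<omega> * indicator A \<omega>)"
        using assms(3) by eventually_elim (use tpos in \<open>auto split: split_indicator\<close>)
    qed
    then have "ennreal (t * (\<integral>\<omega>. \<rho> \<omega> * indicator A \<omega> \<partial>M)) = (\<integral>\<^sup>+\<omega>. ennreal (t * (\<rho> \<omega> * indicator A \<omega>)) \<partial>M)"
      by simp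
    also have "\<dots> \<le> (\<integral>\<^sup>+\<omega>. ennreal (\<rho> \<omega> * X \<omega>) \<partial>M)"
    proof (rule nn_integral_mono_AE)
      have "AE \<omega> in M. \<omega> \<in> space M" by simp
      then show "AE \<omega> in M. ennreal (t * (\<rho> \<omega> * indicator A \<omega>)) \<le> ennreal (\<rho> \<omega> * X \<omega>)"
        using assms(3) X0
      proof eventually_elim
        case (elim \<omega>)
        show ?case
        proof (cases "\<omega> \<in> A")
          case True
          then have "t < X \<omega>" by (simp add: A_def)
          then have "t * \<rho> \<omega> \<le> X \<omega> * \<rho> \<omega>" using elim by (intro mult_right_mono) auto
          then show ?thesis using True by (intro ennreal_leI) (simp add: mult_ac)
        next
          case False
          then show ?thesis by simp
        qed
      qed
    qed
    also have "\<dots> \<le> ennreal x" by (rule bud)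
    finally have "t * (\<integral>\<omega>. \<rho> \<omega> * indicator A \<omega> \<partial>M) \<le> x" using assms(8) by simp
    moreover have "t * E \<le> t * (\<integral>\<omega>. \<rho> \<omega> * indicator A \<omega> \<partial>M)"
      using EA tpos by (intro mult_left_mono) auto
    moreover have "k * E < t * E" using kt Epos by simp
    ultimately show False using xkE by simp
  qed
  define J where "J c = (\<integral>u. indicator {0..1-c} u * Q u \<partial>lborel)" for c
  have zJ: "zeta M \<rho> \<alpha> c = (if c \<le> \<alpha> then 1 else 0) / J c" if "0 < c" for c
    unfolding zeta_def rq J_def using reflect_J[OF that, of F] by simp
  have Jint: "integrable lborel (\<lambda>u. indicator {0..1-c} u * Q u)" if "0 < c" for c
    by (rule Qind_int[OF q that])
  have Jmono: "J \<alpha> \<le> J c" if "0 < c" "c \<le> \<alpha>" for c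
    unfolding J_def
  proof (rule integral_mono[OF Jint[OF assms(6)] Jint[OF that(1)]])
    fix u :: real
    show "indicator {0..1-\<alpha>} u * Q u \<le> indicator {0..1-c} u * Q u"
      using that Q_nonneg[of u] by (auto split: split_indicator)
  qed
  have Jpos: "0 < J \<alpha>"
  proof -
    define p where "p = 1 - \<alpha>"
    have p: "0 < p" "p < 1" using assms(6,7) by (auto simp: p_def)
    have "(\<integral>u. Q (p/2) * indicator {p/2..p} u \<partial>lborel) \<le> J \<alpha>"
      unfolding J_def
    proof (rule integral_mono[OF _ Jint[OF assms(6)]])
      show "integrable lborel (\<lambda>u. Q (p/2) * indicator {p/2..p} u)"
        using p by (intro integrable_mult_right integrable_real_indicator) auto
      fix u :: real
      show "Q (p/2) * indicator {p/2..p} u \<le> indicator {0..1-\<alpha>} u * Q u"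
        using p Q_mono[of "p/2" u] Q_nonneg[of u] by (auto simp: p_def split: split_indicator)
    qed
    moreover have "(\<integral>u. Q (p/2) * indicator {p/2..p} u \<partial>lborel) = Q (p/2) * (p/2)"
      using p by simp
    moreover have Qp: "0 < Q (p/2)" using p by (intro Q_pos) auto
    moreover have "0 < Q (p/2) * (p/2)" using p Qp by simp
    ultimately show ?thesis by linarith
  qed
  have \<delta>J: "J \<alpha> + \<alpha> * \<beta> \<le> \<delta>"
  proof -
    let ?U = "restrict_space lborel {0<..<1::real}"
    have Qm: "Q \<in> borel_measurable ?U" by (rule Q_meas)
    have dist: "distr ?U borel Q = D"
      using quantile_transform[OF D] q unfolding F_def by blast
    have "\<delta> = integral\<^sup>L D (\<lambda>y. y)" unfolding \<delta>_def D_def by (subst integral_distr[OF rhom]) simp_all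
    also have "\<dots> = integral\<^sup>L ?U Q" unfolding dist[symmetric] by (rule integral_distr[OF Qm]) simp
    also have "\<dots> = (\<integral>u. indicator {0<..<1} u *\<^sub>R Q u \<partial>lborel)" by (rule integral_restrict_space) simp
    finally have \<delta>eq: "\<delta> = (\<integral>u. indicator {0<..<1} u * Q u \<partial>lborel)" by simp
    have "integrable D (\<lambda>y. y)" unfolding D_def using assms(4) by (subst integrable_distr_eq[OF rhom]) simp_all
    then have "integrable ?U (\<lambda>u. Q u)" unfolding dist[symmetric] by (subst (asm) integrable_distr_eq[OF Qm]) simp_all
    then have intQ: "integrable lborel (\<lambda>u. indicator {0<..<1} u * Q u)"
      using integrable_restrict_space[of "{0<..<1}" lborel Q] by simp
    have intG: "integrable lborel (\<lambda>u. \<beta> * indicator {1-\<alpha><..<1} u)"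
      using assms(6) by (intro integrable_mult_right integrable_real_indicator) auto
    have "(\<integral>u. indicator {0..1-\<alpha>} u * Q u + \<beta> * indicator {1-\<alpha><..<1} u \<partial>lborel) \<le> \<delta>"
      unfolding \<delta>eq
    proof (rule integral_mono_AE[OF Bochner_Integration.integrable_add[OF Jint[OF assms(6)] intG] intQ])
      show "AE u in lborel. indicator {0..1-\<alpha>} u * Q u + \<beta> * indicator {1-\<alpha><..<1} u \<le> indicator {0<..<1} u * Q u"
        using AE_lborel_singleton[of 0]
      proof eventually_elim
        case (elim u)
        show ?case
        proof (cases "0 < u \<and> u \<le> 1 - \<alpha>")
          case True then show ?thesis using assms(6,7) by (auto split: split_indicator)
        next
          case False
          show ?thesis
          proof (cases "1 - \<alpha> < u \<and> u < 1")
            case True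
            then have "\<beta> \<le> Q u" unfolding \<beta>Q using assms(6,7) by (intro Q_mono) auto
            then show ?thesis using True False assms(6,7) by (auto split: split_indicator)
          next
            case f2: False
            then show ?thesis using False elim by (auto split: split_indicator)
          qed
        qed
      qed
    qed
    moreover have "(\<integral>u. indicator {0..1-\<alpha>} u * Q u + \<beta> * indicator {1-\<alpha><..<1} u \<partial>lborel) = J \<alpha> + \<alpha> * \<beta>"
      unfolding J_def using assms(6,7)
      by (subst Bochner_Integration.integral_add[OF Jint[OF assms(6)] intG]) simp
    ultimately show ?thesis by simp
  qed
  have \<beta>pos': "0 < \<alpha> * \<beta>" using assms(6) \<beta>pos by simp
  have part1: "(SUP c\<in>{0<..<1}. zeta M \<rho> \<alpha> c) = zeta M \<rho> \<alpha> \<alpha>"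
  proof (rule cSup_eq_maximum)
    show "zeta M \<rho> \<alpha> \<alpha> \<in> zeta M \<rho> \<alpha> ` {0<..<1}" using assms(6,7) by auto
    fix z assume "z \<in> zeta M \<rho> \<alpha> ` {0<..<1}"
    then obtain c where c: "0 < c" "c < 1" and z: "z = zeta M \<rho> \<alpha> c" by auto
    show "z \<le> zeta M \<rho> \<alpha> \<alpha>"
    proof (cases "c \<le> \<alpha>")
      case True
      then have "1 / J c \<le> 1 / J \<alpha>" using Jmono[OF c(1) True] Jpos by (intro divide_left_mono) auto
      then show ?thesis using True z zJ[OF c(1)] zJ[OF assms(6)] by simp
    next
      case False
      then show ?thesis using z zJ[OF c(1)] zJ[OF assms(6)] Jpos by simp
    qed
  qed
  have part2: "zeta M \<rho> \<alpha> \<alpha> > 1 / \<delta>"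
    using zJ[OF assms(6)] Jpos \<delta>J \<beta>pos' by (simp add: frac_less2)
  show ?thesis using part1 part2 feas opt qX by simp
qed

end
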